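(* Let $0<\sigma<\tau$, let $\kappa_\sigma,\kappa_2$ satisfy $0<\kappa_\sigma<\kappa_2<1$, and let $\omega_\sigma>0$. Let \[ \sigma<t_2\le\min\Bigl\{\sigma+\frac{\kappa_\sigma}{2\omega_\sigma},\,\tau\Bigr\},\qquad 0<\omega\le\frac{\kappa_2-\kappa_\sigma}{t_2-\sigma}, \] and \[ \mu^\star(\kappa_2,\kappa_\sigma,t_2,\omega_\sigma):=\frac{\kappa_2-\kappa_\sigma+(t_2-\sigma)\omega_\sigma}{g_*(\kappa_\sigma/2,\kappa_2)\int_\sigma^{t_2}A^-(\sigma,\xi)\,d\xi}. \] Then for every $\mu>\mu^\star(\kappa_2,\kappa_\sigma,t_2,\omega_\sigma)$, any solution $(x(t),y(t))$ on $[\sigma,\tau]$ of \[ x'=y,\qquad y'=\mu a^-(t)g(x) \] with $x(\sigma)=\kappa_\sigma$ and $y(\sigma)\ge-\omega_\sigma$ satisfies $x(t_2)>\kappa_2$ and $y(t_2)>\omega$.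
   Context: $a\in L^1(\sigma,\tau)$ with negative part $a^-\ge0$, and $A^-(t',t''):=\int_{t'}^{t''}a^-(\xi)\,d\xi$; it is assumed that $A^-(\sigma,t)>0$ for all $t\in(\sigma,\tau]$. $g\colon\mathbb{R}\to[0,+\infty)$ is the extension by zero outside $[0,1]$ of a locally Lipschitz continuous function $g\colon[0,1]\to[0,+\infty)$ with $g(0)=g(1)=0$, $g(s)>0$ for $0<s<1$ and $\lim_{s\to0^+}g(s)/s=0$. For $0\le\kappa'<\kappa''\le1$, $g_*(\kappa',\kappa''):=\min_{s\in[\kappa',\kappa'']}g(s)$. Solutions are in the Carathéodory sense. *)

theory Defs
  imports "HOL-Analysis.Analysis"
begin

definition negpart :: "(real \<Rightarrow> real) \<Rightarrow> real \<Rightarrow> real" where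
  "negpart a t = max 0 (- a t)"

definition Aminus :: "(real \<Rightarrow> real) \<Rightarrow> real \<Rightarrow> real \<Rightarrow> real" where
  "Aminus a t1 t2 = integral {t1..t2} (negpart a)"

definition gstar :: "(real \<Rightarrow> real) \<Rightarrow> real \<Rightarrow> real \<Rightarrow> real" where
  "gstar g k1 k2 = Inf (g ` {k1..k2})"

definition admissible_g :: "(real \<Rightarrow> real) \<Rightarrow> bool" where
  "admissible_g g \<longleftrightarrow>
     (\<forall>s. s \<notin> {0..1} \<longrightarrow> g s = 0) \<and>
     (\<forall>s\<in>{0..1}. g s \<ge> 0) \<and>
     (\<forall>s\<in>{0..1}. \<exists>e>0. \<exists>L. L-lipschitz_on (cball s e \<inter> {0..1}) g) \<and>
     g 0 = 0 \<and> g 1 = 0 \<and>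
     (\<forall>s. 0 < s \<and> s < 1 \<longrightarrow> g s > 0) \<and>
     ((\<lambda>s. g s / s) \<longlongrightarrow> 0) (at_right 0)"

text \<open>Caratheodory solution on [sigma,tau] of x' = y, y' = mu a^-(t) g(x):
  x, y absolutely continuous, i.e. given by Lebesgue integrals of their
  (integrable) derivatives, which satisfy the system a.e.\<close>
definition cara_solution ::
  "(real \<Rightarrow> real) \<Rightarrow> (real \<Rightarrow> real) \<Rightarrow> real \<Rightarrow> real \<Rightarrow> real \<Rightarrow>
   (real \<Rightarrow> real) \<Rightarrow> (real \<Rightarrow> real) \<Rightarrow> bool" where
  "cara_solution a g mu \<sigma> \<tau> x y \<longleftrightarrow>
     y absolutely_integrable_on {\<sigma>..\<tau>} \<and>
     (\<lambda>s. mu * negpart a s * g (x s)) absolutely_integrable_on {\<sigma>..\<tau>} \<and>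
     (\<forall>t\<in>{\<sigma>..\<tau>}.
        (y has_integral (x t - x \<sigma>)) {\<sigma>..t} \<and>
        ((\<lambda>s. mu * negpart a s * g (x s)) has_integral (y t - y \<sigma>)) {\<sigma>..t})"

end

theory Submission imports Defs begin
lemma g_cont:
  assumes "admissible_g g" shows "continuous_on {0..1} g"
  unfolding continuous_on_eq_continuous_within
proof
  fix s :: real assume s: "s \<in> {0..1}"
  from assms s obtain e L where e: "e > 0" and L: "L-lipschitz_on (cball s e \<inter> {0..1}) g"
    unfolding admissible_g_def by blast
  have L0: "0 \<le> L" using lipschitz_on_nonneg[OF L] .
  show "continuous (at s within {0..1}) g"
    unfolding continuous_within_eps_delta
  proof (intro allI impI)
    fix \<epsilon> :: real assume "\<epsilon> > 0"
    define d where "d = min e (\<epsilon> / (L + 1))"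
    have d: "d > 0" using e \<open>\<epsilon> > 0\<close> L0 by (simp add: d_def)
    show "\<exists>d>0. \<forall>x'\<in>{0..1}. dist x' s < d \<longrightarrow> dist (g x') (g s) < \<epsilon>"
    proof (intro exI conjI ballI impI)
      fix x' :: real assume x': "x' \<in> {0..1}" "dist x' s < d"
      have "x' \<in> cball s e \<inter> {0..1}" using x' d_def by (auto simp: dist_commute)
      moreover have "s \<in> cball s e \<inter> {0..1}" using s e by auto
      ultimately have "dist (g x') (g s) \<le> L * dist x' s" using lipschitz_onD[OF L] by blast
      also have "\<dots> \<le> L * d" using x' L0 by (simp add: mult_left_mono)
      also have "\<dots> < \<epsilon>"
      proof -
        have "d \<le> \<epsilon> / (L + 1)" by (simp add: d_def)
        then have "L * d \<le> L * (\<epsilon> / (L + 1))" using L0 by (rule mult_left_mono)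
        also have "\<dots> < \<epsilon>" using L0 \<open>\<epsilon> > 0\<close> by (simp add: field_simps)
        finally show ?thesis .
      qed
      finally show "dist (g x') (g s) < \<epsilon>" .
    qed (fact d)
  qed
qed

lemma gstar_pos:
  assumes "admissible_g g" "0 < k1" "k1 \<le> k2" "k2 < 1"
  shows "gstar g k1 k2 > 0" "\<And>u. u \<in> {k1..k2} \<Longrightarrow> gstar g k1 k2 \<le> g u"
proof -
  have c: "continuous_on {k1..k2} g"
    using continuous_on_subset[OF g_cont[OF assms(1)]] assms by auto
  obtain z where z: "z \<in> {k1..k2}" "\<And>y. y \<in> {k1..k2} \<Longrightarrow> g z \<le> g y"
    using continuous_attains_inf[OF compact_Icc _ c] assms by auto
  have eq: "gstar g k1 k2 = g z" unfolding gstar_def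
    by (rule cInf_eq_minimum) (use z in auto)
  show "gstar g k1 k2 > 0" using eq z assms unfolding admissible_g_def by auto
  show "\<And>u. u \<in> {k1..k2} \<Longrightarrow> gstar g k1 k2 \<le> g u" using eq z by auto
qed

lemma negpart_int:
  assumes "a absolutely_integrable_on S"
  shows "negpart a integrable_on S"
proof -
  have "(\<lambda>s. \<bar>a s\<bar>) integrable_on S" "a integrable_on S"
    using assms unfolding absolutely_integrable_on_def by auto
  then have "(\<lambda>s. (\<bar>a s\<bar> - a s) / 2) integrable_on S"
    by (intro integrable_on_divide integrable_diff)
  moreover have "(\<lambda>s. (\<bar>a s\<bar> - a s) / 2) = negpart a"
    by (auto simp: negpart_def fun_eq_iff)
  ultimately show ?thesis by simp
qed

theorem lemma2p7:
  fixes a g :: "real \<Rightarrow> real" and \<sigma> \<tau> \<kappa>\<sigma> \<kappa>2 \<omega>\<sigma> t2 \<omega> :: real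
  assumes a_L1: "a absolutely_integrable_on {\<sigma>..\<tau>}"
    and A_pos: "\<forall>t\<in>{\<sigma><..\<tau>}. Aminus a \<sigma> t > 0"
    and g_adm: "admissible_g g"
    and st: "0 < \<sigma>" "\<sigma> < \<tau>"
    and kk: "0 < \<kappa>\<sigma>" "\<kappa>\<sigma> < \<kappa>2" "\<kappa>2 < 1"
    and om_s: "\<omega>\<sigma> > 0"
    and t2: "\<sigma> < t2" "t2 \<le> min (\<sigma> + \<kappa>\<sigma> / (2 * \<omega>\<sigma>)) \<tau>"
    and om: "0 < \<omega>" "\<omega> \<le> (\<kappa>2 - \<kappa>\<sigma>) / (t2 - \<sigma>)"
  shows "\<forall>mu x y.
     mu > (\<kappa>2 - \<kappa>\<sigma> + (t2 - \<sigma>) * \<omega>\<sigma>) /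
          (gstar g (\<kappa>\<sigma> / 2) \<kappa>2 * integral {\<sigma>..t2} (\<lambda>\<xi>. Aminus a \<sigma> \<xi>)) \<and>
     cara_solution a g mu \<sigma> \<tau> x y \<and> x \<sigma> = \<kappa>\<sigma> \<and> y \<sigma> \<ge> - \<omega>\<sigma>
     \<longrightarrow> x t2 > \<kappa>2 \<and> y t2 > \<omega>"
proof (intro allI impI)
  fix mu and x y :: "real \<Rightarrow> real"
  assume H: "mu > (\<kappa>2 - \<kappa>\<sigma> + (t2 - \<sigma>) * \<omega>\<sigma>) /
          (gstar g (\<kappa>\<sigma> / 2) \<kappa>2 * integral {\<sigma>..t2} (\<lambda>\<xi>. Aminus a \<sigma> \<xi>)) \<and>
     cara_solution a g mu \<sigma> \<tau> x y \<and> x \<sigma> = \<kappa>\<sigma> \<and> y \<sigma> \<ge> - \<omega>\<sigma>"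
  define G where "G = gstar g (\<kappa>\<sigma> / 2) \<kappa>2"
  define I where "I = integral {\<sigma>..t2} (\<lambda>\<xi>. Aminus a \<sigma> \<xi>)"
  define N where "N = \<kappa>2 - \<kappa>\<sigma> + (t2 - \<sigma>) * \<omega>\<sigma>"
  define na where "na = negpart a"
  define f where "f = (\<lambda>s. mu * negpart a s * g (x s))"
  have mu: "mu > N / (G * I)" using H by (simp add: N_def G_def I_def)
  have cs: "cara_solution a g mu \<sigma> \<tau> x y" and x0: "x \<sigma> = \<kappa>\<sigma>" and y0: "y \<sigma> \<ge> - \<omega>\<sigma>"
    using H by auto
  have t2\<tau>: "t2 \<le> \<tau>" using t2 by simp
  have t2b: "(t2 - \<sigma>) * (2 * \<omega>\<sigma>) \<le> \<kappa>\<sigma>"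
  proof -
    have "t2 - \<sigma> \<le> \<kappa>\<sigma> / (2 * \<omega>\<sigma>)" using t2 by simp
    then show ?thesis using om_s by (simp add: pos_le_divide_eq)
  qed
  have gnn: "\<And>u. g u \<ge> 0" using g_adm unfolding admissible_g_def
    by (metis order_refl)
  have Gpos: "G > 0" and Gle: "\<And>u. u \<in> {\<kappa>\<sigma>/2..\<kappa>2} \<Longrightarrow> G \<le> g u"
    using gstar_pos[OF g_adm, of "\<kappa>\<sigma>/2" \<kappa>2] kk unfolding G_def by auto
  have nann: "\<And>s. na s \<ge> 0" by (simp add: na_def negpart_def)
  have na_int: "na integrable_on {\<sigma>..\<tau>}" using negpart_int[OF a_L1] by (simp add: na_def)
  have na_sub: "\<And>u v. \<sigma> \<le> u \<Longrightarrow> v \<le> \<tau> \<Longrightarrow> na integrable_on {u..v}"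
    using integrable_on_subinterval[OF na_int] by auto
  have A_eq: "\<And>t. Aminus a \<sigma> t = integral {\<sigma>..t} na" by (simp add: Aminus_def na_def)
  have A_cont: "continuous_on {\<sigma>..\<tau>} (\<lambda>t. Aminus a \<sigma> t)"
    unfolding A_eq by (rule indefinite_integral_continuous_1[OF na_int])
  have A_int: "(\<lambda>t. Aminus a \<sigma> t) integrable_on {\<sigma>..t2}"
    by (rule integrable_continuous_interval, rule continuous_on_subset[OF A_cont]) (use t2\<tau> in auto)
  have A_nn: "\<And>t. t \<le> \<tau> \<Longrightarrow> Aminus a \<sigma> t \<ge> 0" unfolding A_eq
    by (rule integral_nonneg) (auto simp: nann intro: na_sub)
  have Ipos: "I > 0"
  proof -
    define m where "m = (\<sigma> + t2) / 2"
    have m: "\<sigma> < m" "m < t2" using t2 by (auto simp: m_def)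
    have Am: "Aminus a \<sigma> m > 0" using A_pos m t2\<tau> by auto
    have mono: "Aminus a \<sigma> m \<le> Aminus a \<sigma> t" if "t \<in> {m..t2}" for t
      unfolding A_eq
      by (rule integral_subset_le) (use that m t2\<tau> in \<open>auto intro!: na_sub simp: nann\<close>)
    have "(t2 - m) * Aminus a \<sigma> m = integral {m..t2} (\<lambda>t. Aminus a \<sigma> m)" using m by simp
    also have "\<dots> \<le> integral {m..t2} (\<lambda>t. Aminus a \<sigma> t)"
      by (rule integral_le) (use m A_int mono in \<open>auto intro: integrable_on_subinterval\<close>)
    also have "\<dots> \<le> I" unfolding I_def
      by (rule integral_subset_le) (use m A_int A_nn t2\<tau> in \<open>auto intro: integrable_on_subinterval\<close>)
    finally show ?thesis using m Am by (smt (verit) mult_pos_pos)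
  qed
  have Npos: "N > 0"
  proof -
    have "(t2 - \<sigma>) * \<omega>\<sigma> > 0" using t2 om_s by simp
    then show ?thesis using kk by (simp add: N_def)
  qed
  have muGI: "mu * (G * I) > N" using mu Gpos Ipos by (simp add: pos_divide_less_eq)
  have mupos: "mu > 0"
  proof -
    have "N / (G * I) > 0" using Npos Gpos Ipos by simp
    then show ?thesis using mu by simp
  qed
  have fnn: "\<And>s. f s \<ge> 0" unfolding f_def using mupos gnn
    by (simp add: negpart_def)
  have f_int: "f integrable_on {\<sigma>..\<tau>}"
    using cs unfolding cara_solution_def f_def absolutely_integrable_on_def by auto
  have y_int: "y integrable_on {\<sigma>..\<tau>}"
    using cs unfolding cara_solution_def absolutely_integrable_on_def by auto
  have yI: "\<And>t. t \<in> {\<sigma>..\<tau>} \<Longrightarrow> y t = y \<sigma> + integral {\<sigma>..t} f"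
  proof -
    fix t assume "t \<in> {\<sigma>..\<tau>}"
    then have "(f has_integral (y t - y \<sigma>)) {\<sigma>..t}" using cs unfolding cara_solution_def f_def by blast
    then show "y t = y \<sigma> + integral {\<sigma>..t} f" by (simp add: integral_unique)
  qed
  have xI: "\<And>t. t \<in> {\<sigma>..\<tau>} \<Longrightarrow> x t = \<kappa>\<sigma> + integral {\<sigma>..t} y"
  proof -
    fix t assume "t \<in> {\<sigma>..\<tau>}"
    then have "(y has_integral (x t - x \<sigma>)) {\<sigma>..t}" using cs unfolding cara_solution_def by blast
    then show "x t = \<kappa>\<sigma> + integral {\<sigma>..t} y" using x0 by (simp add: integral_unique)
  qed
  have ymono: "y t \<le> y t'" if "\<sigma> \<le> t" "t \<le> t'" "t' \<le> \<tau>" for t t'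
  proof -
    have "integral {\<sigma>..t} f + integral {t..t'} f = integral {\<sigma>..t'} f"
      by (rule Henstock_Kurzweil_Integration.integral_combine) (use that integrable_on_subinterval[OF f_int] in auto)
    moreover have "integral {t..t'} f \<ge> 0"
      by (rule integral_nonneg) (use that integrable_on_subinterval[OF f_int] fnn in auto)
    ultimately show ?thesis using yI[of t] yI[of t'] that by auto
  qed
  have ylow: "y t \<ge> - \<omega>\<sigma>" if "t \<in> {\<sigma>..\<tau>}" for t
    using ymono[of \<sigma> t] that y0 by auto
  have xdiff: "x t' - x t = integral {t..t'} y" if "\<sigma> \<le> t" "t \<le> t'" "t' \<le> \<tau>" for t t'
  proof -
    have "integral {\<sigma>..t} y + integral {t..t'} y = integral {\<sigma>..t'} y"
      by (rule Henstock_Kurzweil_Integration.integral_combine) (use that integrable_on_subinterval[OF y_int] in auto)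
    then show ?thesis using xI[of t] xI[of t'] that by auto
  qed
  have xt2: "x t2 > \<kappa>2"
  proof (rule ccontr)
    assume "\<not> x t2 > \<kappa>2"
    then have xle: "x t2 \<le> \<kappa>2" by simp
    have xup: "x s \<le> \<kappa>2" if s: "s \<in> {\<sigma>..t2}" for s
    proof (rule ccontr)
      assume "\<not> x s \<le> \<kappa>2"
      then have xs: "x s > \<kappa>2" by simp
      have "\<exists>s'\<in>{\<sigma>..s}. y s' > 0"
      proof (rule ccontr)
        assume "\<not> (\<exists>s'\<in>{\<sigma>..s}. y s' > 0)"
        then have "integral {\<sigma>..s} y \<le> integral {\<sigma>..s} (\<lambda>_. 0::real)"
          by (intro integral_le) (use s t2\<tau> integrable_on_subinterval[OF y_int] in \<open>auto simp: not_less\<close>)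
        then show False using xI[of s] s t2\<tau> xs kk by simp
      qed
      then obtain s' where s': "s' \<in> {\<sigma>..s}" "y s' > 0" by blast
      have "integral {s..t2} y \<ge> 0"
      proof (rule integral_nonneg)
        show "y integrable_on {s..t2}" using s t2\<tau> integrable_on_subinterval[OF y_int] by auto
        fix r assume "r \<in> {s..t2}"
        then show "0 \<le> y r" using ymono[of s' r] s' s t2\<tau> by auto
      qed
      then show False using xdiff[of s t2] s t2\<tau> xs xle by auto
    qed
    have xlow: "x s \<ge> \<kappa>\<sigma> / 2" if s: "s \<in> {\<sigma>..t2}" for s
    proof -
      have "integral {\<sigma>..s} (\<lambda>_. - \<omega>\<sigma>) \<le> integral {\<sigma>..s} y"
        by (intro integral_le) (use s t2\<tau> integrable_on_subinterval[OF y_int] ylow in auto)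
      then have "- \<omega>\<sigma> * (s - \<sigma>) \<le> integral {\<sigma>..s} y" using s by (simp add: mult.commute)
      moreover have "\<omega>\<sigma> * (s - \<sigma>) \<le> \<omega>\<sigma> * (t2 - \<sigma>)" using s om_s by simp
      ultimately show ?thesis using xI[of s] s t2\<tau> t2b by (auto simp: algebra_simps)
    qed
    have ybig: "y t \<ge> - \<omega>\<sigma> + mu * G * Aminus a \<sigma> t" if t: "t \<in> {\<sigma>..t2}" for t
    proof -
      have "integral {\<sigma>..t} (\<lambda>s. mu * G * na s) \<le> integral {\<sigma>..t} f"
      proof (rule integral_le)
        show "(\<lambda>s. mu * G * na s) integrable_on {\<sigma>..t}" using integrable_on_cmult_left[OF na_sub[of \<sigma> t], of "mu * G"] t t2\<tau> by simp
        show "f integrable_on {\<sigma>..t}" using t t2\<tau> integrable_on_subinterval[OF f_int] by auto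
        fix s assume s: "s \<in> {\<sigma>..t}"
        then have "G \<le> g (x s)" using Gle xlow xup t by auto
        then have "mu * G * na s \<le> mu * g (x s) * na s"
          using mupos nann[of s] by (simp add: mult_right_mono)
        then show "mu * G * na s \<le> f s" by (simp add: f_def na_def algebra_simps)
      qed
      then show ?thesis using yI[of t] t t2\<tau> y0 A_eq[of t] by simp
    qed
    have Ac: "(\<lambda>t. mu * G * Aminus a \<sigma> t) integrable_on {\<sigma>..t2}"
      using integrable_on_cmult_left[OF A_int, of "mu * G"] by simp
    have Cc: "(\<lambda>t. - \<omega>\<sigma>) integrable_on {\<sigma>..t2}" using integrable_const[of "- \<omega>\<sigma>" \<sigma> t2] by simp
    have Bc: "(\<lambda>t. - \<omega>\<sigma> + mu * G * Aminus a \<sigma> t) integrable_on {\<sigma>..t2}"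
      using integrable_add[OF Cc Ac] by simp
    have "integral {\<sigma>..t2} (\<lambda>t. - \<omega>\<sigma> + mu * G * Aminus a \<sigma> t) \<le> integral {\<sigma>..t2} y"
      by (rule integral_le) (use Bc t2\<tau> integrable_on_subinterval[OF y_int] ybig in auto)
    moreover have "integral {\<sigma>..t2} (\<lambda>t. - \<omega>\<sigma> + mu * G * Aminus a \<sigma> t)
        = - \<omega>\<sigma> * (t2 - \<sigma>) + mu * G * I"
      using t2 integral_add[OF Cc Ac] by (simp add: I_def)
    ultimately have "x t2 - \<kappa>\<sigma> \<ge> - \<omega>\<sigma> * (t2 - \<sigma>) + mu * G * I"
      using xI[of t2] t2 t2\<tau> by simp
    then show False using muGI xle by (simp add: N_def algebra_simps)
  qed
  have "integral {\<sigma>..t2} y \<le> integral {\<sigma>..t2} (\<lambda>_. y t2)"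
    by (rule integral_le) (use t2\<tau> integrable_on_subinterval[OF y_int] ymono in auto)
  then have "x t2 - \<kappa>\<sigma> \<le> (t2 - \<sigma>) * y t2" using xI[of t2] t2 t2\<tau> by simp
  moreover have "\<omega> * (t2 - \<sigma>) \<le> \<kappa>2 - \<kappa>\<sigma>" using om t2 by (simp add: pos_le_divide_eq)
  ultimately have "\<omega> * (t2 - \<sigma>) < y t2 * (t2 - \<sigma>)" using xt2 by (simp add: algebra_simps)
  then have "\<omega> < y t2" using t2 by simp
  with xt2 show "x t2 > \<kappa>2 \<and> y t2 > \<omega>" by simp
qed

end
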